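(* The topology automaton $M_K$ of a fractal gasket $K$ is a gasket automaton.
   Context: Let $\Delta\subset\mathbb R^2$ be the triangle with vertices $\omega_\alpha=(0,0)$, $\omega_\beta=(1,0)$, $\omega_\gamma=(1/2,\sqrt3/2)$. A fractal gasket is the attractor $K$ of $\{\varphi_j(z)=r_j(z+d_j)\}_{j=1}^N$, $r_j\in(0,1)$, $d_j\in\mathbb R^2$, with $\bigcup_j\varphi_j(\Delta)\subset\Delta$ and, for $i\neq j$, $\varphi_i(\Delta)\cap\varphi_j(\Delta)$ consisting only of common vertices. $\Sigma=\{1,\dots,N\}$; $\alpha=-1$ if $(0,0)\notin K$, else $\alpha$ is the index with $\varphi_\alpha((0,0))=(0,0)$; $\beta=-2$ or $\varphi_\beta$ fixes $(1,0)$; $\gamma=-3$ or $\varphi_\gamma$ fixes $\omega_\gamma$. Triangle automaton: state set $Q=\{S_{uv}:u\ne v\in\{\alpha,\beta,\gamma\}\}\cup\{Id,Exit\}$, input alphabet $\Sigma^2$, initial state $Id$, transition $\delta$ with $\delta(Id,(i,j))=Id$ iff $i=j$; $\delta(Id,(i,j))=S_{uv}\Rightarrow\delta(Id,(j,i))=S_{vu}$; $\delta(S_{uv},(i,j))=S_{uv}$ if $(i,j)=(v,u)$, else $Exit$. The topology automaton $M_K$ is the triangle automaton with, for $i\ne j$: $\delta(Id,(i,j))=S_{uv}$ if $u,v\in\Sigma$ and $\varphi_i(\omega_v)=\varphi_j(\omega_u)$; $\delta(Id,(i,j))=Exit$ if $\varphi_i(K)\cap\varphi_j(K)=\emptyset$.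 With $\mathcal P_{uv}=\{(i,j):\delta(Id,(i,j))=S_{uv}\}$, $i\triangleleft_{uv}j$ iff $(i,j)\in\mathcal P_{uv}$ (iff $j\triangleleft_{vu}i$), and $j$ $uv$-minimal iff no $i\triangleleft_{uv}j$: a gasket automaton is a triangle automaton with (Uniqueness) $i\triangleleft_{uv}j,i\triangleleft_{uv}j'\Rightarrow j=j'$; (Gathering) any two of $a\triangleleft_{\alpha\gamma}c$, $a\triangleleft_{\beta\gamma}b$, $b\triangleleft_{\alpha\beta}c$ imply the third; (Boundary) if $\alpha\in\Sigma$ it is $\alpha\gamma$- and $\alpha\beta$-minimal; if $\beta\in\Sigma$ it is $\beta\gamma$- and $\beta\alpha$-minimal; if $\gamma\in\Sigma$ it is $\gamma\alpha$- and $\gamma\beta$-minimal. *)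

theory Defs
  imports "HOL-Analysis.Analysis"
begin

datatype vlabel = VA | VB | VC

definition vert :: "vlabel \<Rightarrow> real \<times> real" where
  "vert u = (case u of VA \<Rightarrow> (0, 0) | VB \<Rightarrow> (1, 0) | VC \<Rightarrow> (1/2, sqrt 3 / 2))"

definition Delta :: "(real \<times> real) set" where
  "Delta = convex hull {vert VA, vert VB, vert VC}"

definition phi :: "(nat \<Rightarrow> real) \<Rightarrow> (nat \<Rightarrow> real \<times> real) \<Rightarrow> nat \<Rightarrow> real \<times> real \<Rightarrow> real \<times> real" where
  "phi r d j z = r j *\<^sub>R (z + d j)"

abbreviation Sig :: "nat \<Rightarrow> nat set" where
  "Sig N \<equiv> {1..N}"

definition is_attractor :: "nat \<Rightarrow> (nat \<Rightarrow> real) \<Rightarrow> (nat \<Rightarrow> real \<times> real) \<Rightarrow> (real \<times> real) set \<Rightarrow> bool" where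
  "is_attractor N r d K \<longleftrightarrow> compact K \<and> K \<noteq> {} \<and> K = (\<Union>j\<in>Sig N. phi r d j ` K)"

definition fractal_gasket :: "nat \<Rightarrow> (nat \<Rightarrow> real) \<Rightarrow> (nat \<Rightarrow> real \<times> real) \<Rightarrow> (real \<times> real) set \<Rightarrow> bool" where
  "fractal_gasket N r d K \<longleftrightarrow>
     (\<forall>j\<in>Sig N. 0 < r j \<and> r j < 1) \<and>
     (\<Union>j\<in>Sig N. phi r d j ` Delta) \<subseteq> Delta \<and>
     (\<forall>i\<in>Sig N. \<forall>j\<in>Sig N. i \<noteq> j \<longrightarrow>
        phi r d i ` Delta \<inter> phi r d j ` Delta \<subseteq>
          {p. \<exists>u v. p = phi r d i (vert u) \<and> p = phi r d j (vert v)}) \<and>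
     is_attractor N r d K"

definition vcode :: "vlabel \<Rightarrow> int" where
  "vcode u = (case u of VA \<Rightarrow> -1 | VB \<Rightarrow> -2 | VC \<Rightarrow> -3)"

definition vidx :: "nat \<Rightarrow> (nat \<Rightarrow> real) \<Rightarrow> (nat \<Rightarrow> real \<times> real) \<Rightarrow> (real \<times> real) set \<Rightarrow> vlabel \<Rightarrow> int" where
  "vidx N r d K u =
     (if vert u \<notin> K then vcode u
      else int (THE j. j \<in> Sig N \<and> phi r d j (vert u) = vert u))"

datatype state = Id | Exit | S vlabel vlabel

definition Qstates :: "state set" where
  "Qstates = {Id, Exit} \<union> {S u v | u v. u \<noteq> v}"

definition triangle_automaton :: "nat \<Rightarrow> (vlabel \<Rightarrow> int) \<Rightarrow> (state \<Rightarrow> nat \<times> nat \<Rightarrow> state) \<Rightarrow> bool" where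
  "triangle_automaton N idx \<delta> \<longleftrightarrow>
     (\<forall>q\<in>Qstates. \<forall>i\<in>Sig N. \<forall>j\<in>Sig N. \<delta> q (i, j) \<in> Qstates) \<and>
     (\<forall>i\<in>Sig N. \<forall>j\<in>Sig N. \<delta> Id (i, j) = Id \<longleftrightarrow> i = j) \<and>
     (\<forall>i\<in>Sig N. \<forall>j\<in>Sig N. \<forall>u v. \<delta> Id (i, j) = S u v \<longrightarrow> \<delta> Id (j, i) = S v u) \<and>
     (\<forall>u v. u \<noteq> v \<longrightarrow> (\<forall>i\<in>Sig N. \<forall>j\<in>Sig N.
        \<delta> (S u v) (i, j) = (if int i = idx v \<and> int j = idx u then S u v else Exit)))"

definition prec :: "nat \<Rightarrow> (state \<Rightarrow> nat \<times> nat \<Rightarrow> state) \<Rightarrow> vlabel \<Rightarrow> vlabel \<Rightarrow> nat \<Rightarrow> nat \<Rightarrow> bool" where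
  "prec N \<delta> u v i j \<longleftrightarrow> i \<in> Sig N \<and> j \<in> Sig N \<and> \<delta> Id (i, j) = S u v"

definition uv_minimal :: "nat \<Rightarrow> (state \<Rightarrow> nat \<times> nat \<Rightarrow> state) \<Rightarrow> vlabel \<Rightarrow> vlabel \<Rightarrow> nat \<Rightarrow> bool" where
  "uv_minimal N \<delta> u v j \<longleftrightarrow> \<not> (\<exists>i. prec N \<delta> u v i j)"

definition gasket_automaton :: "nat \<Rightarrow> (vlabel \<Rightarrow> int) \<Rightarrow> (state \<Rightarrow> nat \<times> nat \<Rightarrow> state) \<Rightarrow> bool" where
  "gasket_automaton N idx \<delta> \<longleftrightarrow>
     triangle_automaton N idx \<delta> \<and>
     \<comment> \<open>Uniqueness\<close>
     (\<forall>u v i j j'. u \<noteq> v \<longrightarrow> prec N \<delta> u v i j \<longrightarrow> prec N \<delta> u v i j' \<longrightarrow> j = j') \<and>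
     \<comment> \<open>Gathering\<close>
     (\<forall>a b c.
        (prec N \<delta> VA VC a c \<and> prec N \<delta> VB VC a b \<longrightarrow> prec N \<delta> VA VB b c) \<and>
        (prec N \<delta> VA VC a c \<and> prec N \<delta> VA VB b c \<longrightarrow> prec N \<delta> VB VC a b) \<and>
        (prec N \<delta> VB VC a b \<and> prec N \<delta> VA VB b c \<longrightarrow> prec N \<delta> VA VC a c)) \<and>
     \<comment> \<open>Boundary\<close>
     (idx VA \<in> int ` Sig N \<longrightarrow>
        uv_minimal N \<delta> VA VC (nat (idx VA)) \<and> uv_minimal N \<delta> VA VB (nat (idx VA))) \<and>
     (idx VB \<in> int ` Sig N \<longrightarrow>
        uv_minimal N \<delta> VB VC (nat (idx VB)) \<and> uv_minimal N \<delta> VB VA (nat (idx VB))) \<and>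
     (idx VC \<in> int ` Sig N \<longrightarrow>
        uv_minimal N \<delta> VC VA (nat (idx VC)) \<and> uv_minimal N \<delta> VC VB (nat (idx VC)))"

definition topology_automaton :: "nat \<Rightarrow> (nat \<Rightarrow> real) \<Rightarrow> (nat \<Rightarrow> real \<times> real) \<Rightarrow> (real \<times> real) set
    \<Rightarrow> (state \<Rightarrow> nat \<times> nat \<Rightarrow> state) \<Rightarrow> bool" where
  "topology_automaton N r d K \<delta> \<longleftrightarrow>
     triangle_automaton N (vidx N r d K) \<delta> \<and>
     (\<forall>i\<in>Sig N. \<forall>j\<in>Sig N. i \<noteq> j \<longrightarrow>
        (\<forall>u v. u \<noteq> v \<and> vidx N r d K u \<in> int ` Sig N \<and> vidx N r d K v \<in> int ` Sig N \<and>
               phi r d i (vert v) = phi r d j (vert u) \<longrightarrow> \<delta> Id (i, j) = S u v) \<and>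
        (phi r d i ` K \<inter> phi r d j ` K = {} \<longrightarrow> \<delta> Id (i, j) = Exit))"

end

theory Submission
  imports Defs
begin

lemma vlabel_UNIV: "(UNIV::vlabel set) = {VA,VB,VC}"
  using vlabel.exhaust by auto

lemma phi_diff: "phi r d j x - phi r d j y = r j *\<^sub>R (x - y)"
  by (simp add: phi_def algebra_simps)

lemma phi_inj: "r j > 0 \<Longrightarrow> phi r d j x = phi r d j y \<Longrightarrow> x = y"
  using phi_diff[of r d j x y] by simp

lemma vert_inj: "vert u = vert v \<Longrightarrow> u = v"
  by (cases u; cases v; simp add: vert_def)

lemma Delta_T:
  assumes "p \<in> Delta"
  shows "0 \<le> snd p \<and> snd p \<le> sqrt 3 * fst p \<and> snd p \<le> sqrt 3 * (1 - fst p)"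
proof -
  obtain a b c where abc: "0 \<le> a" "0 \<le> b" "0 \<le> c" "a + b + c = 1"
    "p = a *\<^sub>R vert VA + b *\<^sub>R vert VB + c *\<^sub>R vert VC"
    using assms unfolding Delta_def convex_hull_3 by blast
  have p: "fst p = b + c/2" "snd p = c * sqrt 3 / 2" using abc(5) by (auto simp: vert_def)
  have s: "sqrt 3 \<ge> 0" by simp
  have "0 \<le> sqrt 3 * b" using abc s by simp
  moreover have "0 \<le> sqrt 3 * a" using abc s by simp
  moreover have "0 \<le> c * sqrt 3" using abc s by simp
  moreover have "a = 1 - b - c" using abc by simp
  ultimately show ?thesis using p by (auto simp: algebra_simps)
qed

lemma vert_Delta: "vert u \<in> Delta"
  unfolding Delta_def by (cases u) (auto intro: hull_inc)

lemma convex_Delta: "convex Delta"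
  unfolding Delta_def by simp

lemma compact_Delta: "compact Delta"
  unfolding Delta_def by (simp add: compact_convex_hull)

lemma corner:
  assumes "r > 0" "k \<in> Delta" "vert u + r *\<^sub>R (vert u - k) \<in> Delta"
  shows "k = vert u"
proof -
  obtain x y where k: "k = (x, y)" by (cases k)
  have s: "sqrt 3 > 0" by simp
  have s2: "sqrt 3 * sqrt 3 = 3" by simp
  note T1 = Delta_T[OF assms(2)] and T2 = Delta_T[OF assms(3)]
  show ?thesis
  proof (cases u)
    case VA
    then have "0 \<le> - r * y" "- r * y \<le> sqrt 3 * (- r * x)" using T2 by (auto simp: k vert_def)
    with T1 assms(1) s have "x = 0 \<and> y = 0" unfolding k fst_conv snd_conv
      by (smt (verit) mult_less_0_iff zero_le_mult_iff)
    then show ?thesis by (simp add: k VA vert_def)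
  next
    case VB
    then have "0 \<le> - r * y" "- r * y \<le> sqrt 3 * (1 - (1 + r * (1 - x)))" using T2 by (auto simp: k vert_def algebra_simps)
    note h = this
    have "r * y \<le> 0" using h(1) by simp
    then have "y \<le> 0" using assms(1) by (simp add: mult_le_0_iff)
    moreover have "0 \<le> y" using T1 by (simp add: k)
    ultimately have y: "y = 0" by simp
    have "0 \<le> sqrt 3 * (r * (x - 1))" using h(2) y by (simp add: algebra_simps)
    then have "0 \<le> r * (x - 1)" using s by (simp add: zero_le_mult_iff)
    then have "x \<ge> 1" using assms(1) by (simp add: zero_le_mult_iff)
    moreover have "0 \<le> sqrt 3 * (1 - x)" using T1 y by (simp add: k)
    then have "x \<le> 1" using s by (simp add: zero_le_mult_iff)
    ultimately have "x = 1 \<and> y = 0" using y by simp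
    then show ?thesis by (simp add: k VB vert_def)
  next
    case VC
    then have "sqrt 3 / 2 + r * (sqrt 3 / 2 - y) \<le> sqrt 3 * (1/2 + r * (1/2 - x))"
       "sqrt 3 / 2 + r * (sqrt 3 / 2 - y) \<le> sqrt 3 * (1 - (1/2 + r * (1/2 - x)))" using T2 by (auto simp: k vert_def algebra_simps)
    note h = this
    have "r * (sqrt 3 / 2 - y) \<le> r * (sqrt 3 / 2 - sqrt 3 * x)" using h(1) by (simp add: algebra_simps)
    then have a: "sqrt 3 * x \<le> y" using assms(1) by (simp add: mult_le_cancel_left_pos)
    have "r * (sqrt 3 / 2 - y) \<le> r * (sqrt 3 * x - sqrt 3 / 2)" using h(2) by (simp add: algebra_simps)
    then have b: "sqrt 3 - sqrt 3 * x \<le> y" using assms(1) by (simp add: mult_le_cancel_left_pos)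
    have c: "y \<le> sqrt 3 * x" "y \<le> sqrt 3 - sqrt 3 * x" using T1 by (auto simp: k algebra_simps)
    have e: "sqrt 3 * (2 * x) = 2 * (sqrt 3 * x)" by simp
    have "sqrt 3 * (2 * x) = sqrt 3 * 1" unfolding e using a b c by linarith
    then have "2 * x = 1" using s by (metis mult_cancel_left less_irrefl)
    then have "x = 1/2 \<and> y = sqrt 3 / 2" using a c by auto
    then show ?thesis by (simp add: k VC vert_def)
  qed
qed


lemma fgD:
  assumes "fractal_gasket N r d K"
  shows "\<And>j. j \<in> Sig N \<Longrightarrow> 0 < r j" "\<And>j. j \<in> Sig N \<Longrightarrow> r j < 1"
    "\<And>j. j \<in> Sig N \<Longrightarrow> phi r d j ` Delta \<subseteq> Delta"
    "\<And>i j. i \<in> Sig N \<Longrightarrow> j \<in> Sig N \<Longrightarrow> i \<noteq> j \<Longrightarrow>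
        phi r d i ` Delta \<inter> phi r d j ` Delta \<subseteq>
          {p. \<exists>u v. p = phi r d i (vert u) \<and> p = phi r d j (vert v)}"
    "compact K" "K \<noteq> {}" "K = (\<Union>j\<in>Sig N. phi r d j ` K)"
  using assms unfolding fractal_gasket_def is_attractor_def by blast+

lemma dist_phi: "r j > 0 \<Longrightarrow> dist (phi r d j x) (phi r d j y) = r j * dist x y"
  by (simp add: dist_norm phi_diff)

lemma K_sub:
  assumes fg: "fractal_gasket N r d K"
  shows "K \<subseteq> Delta"
proof -
  note F = fgD[OF fg]
  have cD: "closed Delta" using compact_Delta compact_imp_closed by blast
  have neD: "Delta \<noteq> {}" using vert_Delta by blast
  have cont: "continuous_on K (\<lambda>x. infdist x Delta)"
    by (rule continuous_on_infdist[OF continuous_on_id])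
  obtain x where x: "x \<in> K" "\<And>y. y \<in> K \<Longrightarrow> infdist y Delta \<le> infdist x Delta"
    using continuous_attains_sup[OF F(5) F(6) cont] by blast
  obtain j y where jy: "j \<in> Sig N" "y \<in> K" "x = phi r d j y"
    using x(1) F(7) by blast
  obtain z where z: "z \<in> Delta" "infdist y Delta = dist y z"
    using infdist_attains_inf[OF cD neD] by metis
  have pz: "phi r d j z \<in> Delta" using F(3)[OF jy(1)] z(1) by blast
  have "infdist x Delta \<le> dist x (phi r d j z)" by (rule infdist_le[OF pz])
  also have "\<dots> = r j * infdist y Delta" using jy(3) z(2) dist_phi[of r j d, OF F(1)[OF jy(1)]] by simp
  also have "\<dots> \<le> r j * infdist x Delta"
    using x(2)[OF jy(2)] F(1)[OF jy(1)] by (simp add: mult_left_mono)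
  finally have "infdist x Delta \<le> r j * infdist x Delta" .
  then have "(1 - r j) * infdist x Delta \<le> 0" by (simp add: algebra_simps)
  moreover have "1 - r j > 0" using F(2)[OF jy(1)] by simp
  ultimately have "infdist x Delta \<le> 0" by (simp add: mult_le_0_iff)
  show ?thesis
  proof
    fix w assume "w \<in> K"
    then have "infdist w Delta = 0" using x(2) \<open>infdist x Delta \<le> 0\<close> infdist_nonneg[of w Delta]
      by (meson order_antisym order_trans)
    then show "w \<in> Delta" using in_closed_iff_infdist_zero[OF cD neD] by blast
  qed
qed

lemma convex_phi_image:
  assumes "convex A" shows "convex (phi r d j ` A)"
  unfolding convex_def
proof (intro ballI allI impI)
  fix x y u v assume xy: "x \<in> phi r d j ` A" "y \<in> phi r d j ` A" and uv: "0 \<le> (u::real)" "0 \<le> v" "u + v = 1"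
  obtain a b where ab: "a \<in> A" "b \<in> A" "x = phi r d j a" "y = phi r d j b" using xy by blast
  have "u *\<^sub>R a + v *\<^sub>R b \<in> A" using assms ab uv unfolding convex_def by blast
  moreover have "u *\<^sub>R x + v *\<^sub>R y = phi r d j (u *\<^sub>R a + v *\<^sub>R b)"
  proof -
    have "u *\<^sub>R (a + d j) + v *\<^sub>R (b + d j) = u *\<^sub>R a + v *\<^sub>R b + (u + v) *\<^sub>R d j"
      by (simp add: algebra_simps)
    then have e: "u *\<^sub>R (a + d j) + v *\<^sub>R (b + d j) = u *\<^sub>R a + v *\<^sub>R b + d j" using uv(3) by simp
    show ?thesis unfolding ab phi_def e[symmetric] by (simp add: scaleR_add_right mult.commute)
  qed
  ultimately show "u *\<^sub>R x + v *\<^sub>R y \<in> phi r d j ` A" by blast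
qed

lemma phi_vert_img: "phi r d i (vert u) \<in> phi r d i ` Delta"
  by (rule imageI[OF vert_Delta])

lemma two_points:
  assumes fg: "fractal_gasket N r d K" and ij: "i \<in> Sig N" "j \<in> Sig N" "i \<noteq> j"
    and p: "p \<in> phi r d i ` Delta" "p \<in> phi r d j ` Delta"
    and q: "q \<in> phi r d i ` Delta" "q \<in> phi r d j ` Delta"
  shows "p = q"
proof -
  note F = fgD[OF fg]
  have "closed_segment p q \<subseteq> phi r d i ` Delta \<inter> phi r d j ` Delta"
    using closed_segment_subset[OF p(1) q(1) convex_phi_image[OF convex_Delta]]
      closed_segment_subset[OF p(2) q(2) convex_phi_image[OF convex_Delta]] by blast
  also have "\<dots> \<subseteq> phi r d i ` vert ` UNIV" using F(4)[OF ij] by blast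
  finally have "finite (closed_segment p q)"
    by (rule finite_subset) (simp add: vlabel_UNIV)
  then show ?thesis by simp
qed

lemma same_label:
  assumes fg: "fractal_gasket N r d K" and ij: "i \<in> Sig N" "j \<in> Sig N" "i \<noteq> j"
    and eq: "phi r d i (vert u) = phi r d j (vert u)"
  shows False
proof -
  note F = fgD[OF fg]
  define c :: "real \<times> real" where "c = (1/3) *\<^sub>R vert VA + (1/3) *\<^sub>R vert VB + (1/3) *\<^sub>R vert VC"
  have cD: "c \<in> Delta" unfolding c_def Delta_def convex_hull_3 by force
  have cne: "c \<noteq> vert u"
    by (cases u) (auto simp: c_def vert_def)
  define m where "m = min (r i) (r j)"
  have m: "m > 0" "m \<le> r i" "m \<le> r j" using F(1)[OF ij(1)] F(1)[OF ij(2)] by (auto simp: m_def)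
  have inimg: "phi r d k (vert u) + m *\<^sub>R (c - vert u) \<in> phi r d k ` Delta"
    if k: "0 < r k" "m \<le> r k" for k
  proof -
    define t where "t = m / r k"
    have t: "0 \<le> t" "t \<le> 1" "r k * t = m" using k m by (auto simp: t_def field_simps)
    have "(1 - t) *\<^sub>R vert u + t *\<^sub>R c \<in> Delta"
      using convex_Delta vert_Delta cD t unfolding convex_def by simp
    moreover have "(1 - t) *\<^sub>R vert u + t *\<^sub>R c = vert u + t *\<^sub>R (c - vert u)"
      by (simp add: algebra_simps)
    moreover have "phi r d k (vert u + t *\<^sub>R (c - vert u)) = phi r d k (vert u) + m *\<^sub>R (c - vert u)"
      using phi_diff[of r d k "vert u + t *\<^sub>R (c - vert u)" "vert u"] t(3)
      by (simp add: algebra_simps)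
    ultimately show ?thesis by (metis image_eqI)
  qed
  have a: "phi r d i (vert u) + m *\<^sub>R (c - vert u) \<in> phi r d i ` Delta"
    using inimg F(1)[OF ij(1)] m by blast
  have b: "phi r d i (vert u) + m *\<^sub>R (c - vert u) \<in> phi r d j ` Delta"
    using inimg[of j] F(1)[OF ij(2)] m eq by simp
  have "phi r d i (vert u) = phi r d i (vert u) + m *\<^sub>R (c - vert u)"
    by (metis two_points[OF fg ij] phi_vert_img a b eq)
  then show False using m cne by simp
qed

lemma phi_vert_inj:
  assumes fg: "fractal_gasket N r d K" "i \<in> Sig N" "phi r d i (vert u) = phi r d i (vert v)"
  shows "u = v"
  using phi_inj[OF fgD(1)[OF fg(1,2)] fg(3)] vert_inj by blast

lemma fix_exists:
  assumes fg: "fractal_gasket N r d K" and u: "vert u \<in> K"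
  shows "\<exists>j\<in>Sig N. phi r d j (vert u) = vert u"
proof -
  note F = fgD[OF fg]
  obtain j k where jk: "j \<in> Sig N" "k \<in> K" "vert u = phi r d j k" using u F(7) by blast
  have kD: "k \<in> Delta" using K_sub[OF fg] jk(2) by blast
  have "phi r d j (vert u) \<in> Delta" using F(3)[OF jk(1)] vert_Delta by blast
  moreover have "phi r d j (vert u) = vert u + r j *\<^sub>R (vert u - k)"
    using phi_diff[of r d j "vert u" k] jk(3) by (simp add: algebra_simps)
  ultimately have "k = vert u" using corner[OF F(1)[OF jk(1)] kD] by simp
  then have "phi r d j (vert u) = vert u" using jk(3) by simp
  then show ?thesis using jk(1) by blast
qed

lemma vidx_K:
  assumes fg: "fractal_gasket N r d K" and u: "vert u \<in> K"
  shows "nat (vidx N r d K u) \<in> Sig N \<and> phi r d (nat (vidx N r d K u)) (vert u) = vert u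
     \<and> vidx N r d K u = int (nat (vidx N r d K u))"
proof -
  have ex: "\<exists>!j. j \<in> Sig N \<and> phi r d j (vert u) = vert u"
    using fix_exists[OF fg u] same_label[OF fg] by metis
  have "vidx N r d K u = int (THE j. j \<in> Sig N \<and> phi r d j (vert u) = vert u)"
    using u by (simp add: vidx_def)
  then show ?thesis using theI'[OF ex] by simp
qed

lemma vidx_in_iff:
  assumes fg: "fractal_gasket N r d K"
  shows "vidx N r d K u \<in> int ` Sig N \<longleftrightarrow> vert u \<in> K"
proof
  assume "vidx N r d K u \<in> int ` Sig N"
  then show "vert u \<in> K"
    by (cases u) (auto simp: vidx_def vcode_def split: if_splits)
next
  assume "vert u \<in> K"
  then show "vidx N r d K u \<in> int ` Sig N" using vidx_K[OF fg] by (metis image_eqI)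
qed

definition coin where
  "coin N r d K i j u v \<longleftrightarrow> i \<in> Sig N \<and> j \<in> Sig N \<and> i \<noteq> j \<and> u \<noteq> v \<and> vert u \<in> K \<and> vert v \<in> K
     \<and> phi r d i (vert v) = phi r d j (vert u)"

lemma coin_unique:
  assumes fg: "fractal_gasket N r d K" and c: "coin N r d K i j u v" "coin N r d K i j u' v'"
  shows "u = u' \<and> v = v'"
proof (cases "v = v'")
  case True
  then show ?thesis using c phi_vert_inj[OF fg] unfolding coin_def by metis
next
  case False
  have "phi r d i (vert v) = phi r d i (vert v')"
    using two_points[OF fg, of i j] c phi_vert_img unfolding coin_def by metis
  then show ?thesis using False c phi_vert_inj[OF fg] unfolding coin_def by metis
qed


lemma prec_coin:
  assumes fg: "fractal_gasket N r d K" and ta: "topology_automaton N r d K \<delta>"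
  shows "prec N \<delta> u v i j \<longleftrightarrow> coin N r d K i j u v"
proof
  note F = fgD[OF fg]
  have tr: "triangle_automaton N (vidx N r d K) \<delta>" using ta unfolding topology_automaton_def by blast
  assume p: "prec N \<delta> u v i j"
  then have ij: "i \<in> Sig N" "j \<in> Sig N" "\<delta> Id (i, j) = S u v" unfolding prec_def by auto
  have "\<delta> Id (i, j) = Id \<longleftrightarrow> i = j" using tr ij unfolding triangle_automaton_def by blast
  then have ne: "i \<noteq> j" using ij(3) by auto
  have TA: "phi r d i ` K \<inter> phi r d j ` K = {} \<longrightarrow> \<delta> Id (i, j) = Exit"
    "\<forall>u v. u \<noteq> v \<and> vidx N r d K u \<in> int ` Sig N \<and> vidx N r d K v \<in> int ` Sig N \<and>
               phi r d i (vert v) = phi r d j (vert u) \<longrightarrow> \<delta> Id (i, j) = S u v"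
    using ta ij(1,2) ne unfolding topology_automaton_def by blast+
  have "phi r d i ` K \<inter> phi r d j ` K \<noteq> {}"
    using TA(1) ij(3) by auto
  then obtain k k' where kk: "k \<in> K" "k' \<in> K" "phi r d i k = phi r d j k'" by blast
  have "phi r d i k \<in> phi r d i ` Delta \<inter> phi r d j ` Delta"
    using kk K_sub[OF fg] by (metis IntI image_eqI subsetD)
  then obtain a b where ab: "phi r d i k = phi r d i (vert a)" "phi r d i k = phi r d j (vert b)"
    using F(4)[OF ij(1,2) ne] by blast
  have ka: "k = vert a" using phi_inj[of r i d, OF F(1)[OF ij(1)] ab(1)] .
  have kb: "k' = vert b" using phi_inj[of r j d, OF F(1)[OF ij(2)]] ab(2) kk(3) by metis
  have eq: "phi r d i (vert a) = phi r d j (vert b)" using ab by simp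
  have anb: "b \<noteq> a" using same_label[OF fg ij(1,2) ne] eq by metis
  have "\<delta> Id (i, j) = S b a"
  proof -
    have "vert a \<in> K" "vert b \<in> K" using kk ka kb by auto
    then have "vidx N r d K a \<in> int ` Sig N" "vidx N r d K b \<in> int ` Sig N"
      using vidx_in_iff[OF fg] by blast+
    then show ?thesis using TA(2) anb eq by blast
  qed
  then have "u = b" "v = a" using ij by auto
  then show "coin N r d K i j u v" using ij ne anb eq kk ka kb unfolding coin_def by auto
next
  assume c: "coin N r d K i j u v"
  then have "\<delta> Id (i, j) = S u v"
  proof -
    have c': "i \<in> Sig N" "j \<in> Sig N" "i \<noteq> j" "u \<noteq> v" "vert u \<in> K" "vert v \<in> K"
       "phi r d i (vert v) = phi r d j (vert u)" using c unfolding coin_def by auto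
    have "\<forall>u v. u \<noteq> v \<and> vidx N r d K u \<in> int ` Sig N \<and> vidx N r d K v \<in> int ` Sig N \<and>
               phi r d i (vert v) = phi r d j (vert u) \<longrightarrow> \<delta> Id (i, j) = S u v"
      using ta c'(1-3) unfolding topology_automaton_def by blast
    moreover have "vidx N r d K u \<in> int ` Sig N" "vidx N r d K v \<in> int ` Sig N"
      using vidx_in_iff[OF fg] c'(5,6) by blast+
    ultimately show ?thesis using c'(4,7) by blast
  qed
  then show "prec N \<delta> u v i j" using c unfolding prec_def coin_def by auto
qed

lemma boundary:
  assumes fg: "fractal_gasket N r d K" and ta: "topology_automaton N r d K \<delta>"
    and u: "vidx N r d K u \<in> int ` Sig N"
  shows "uv_minimal N \<delta> u v (nat (vidx N r d K u))"
  unfolding uv_minimal_def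
proof
  note F = fgD[OF fg]
  assume "\<exists>i. prec N \<delta> u v i (nat (vidx N r d K u))"
  then obtain i where "coin N r d K i (nat (vidx N r d K u)) u v"
    using prec_coin[OF fg ta] by blast
  moreover have "vert u \<in> K" using u vidx_in_iff[OF fg] by blast
  note vk = vidx_K[OF fg this]
  ultimately have i: "i \<in> Sig N" "u \<noteq> v" "phi r d i (vert v) = vert u"
    unfolding coin_def by auto
  have "phi r d i (vert u) \<in> Delta" using F(3)[OF i(1)] vert_Delta by blast
  moreover have "phi r d i (vert u) = vert u + r i *\<^sub>R (vert u - vert v)"
    using phi_diff[of r d i "vert u" "vert v"] i(3) by (simp add: algebra_simps)
  ultimately have "vert v = vert u" using corner[OF F(1)[OF i(1)] vert_Delta] by simp
  then show False using i(2) vert_inj by metis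
qed

theorem lemma4p1:
  fixes N :: nat and r :: "nat \<Rightarrow> real" and d :: "nat \<Rightarrow> real \<times> real"
    and K :: "(real \<times> real) set"
  assumes "fractal_gasket N r d K"
  shows "(\<exists>\<delta>. topology_automaton N r d K \<delta>) \<and>
         (\<forall>\<delta>. topology_automaton N r d K \<delta> \<longrightarrow> gasket_automaton N (vidx N r d K) \<delta>)"
proof
  note fg = assms
  note F = fgD[OF fg]
  let ?C = "coin N r d K"
  define \<delta> where "\<delta> q ij = (case q of
      Id \<Rightarrow> (if fst ij = snd ij then Id
             else if \<exists>uv. ?C (fst ij) (snd ij) (fst uv) (snd uv)
             then S (fst (SOME uv. ?C (fst ij) (snd ij) (fst uv) (snd uv)))
                    (snd (SOME uv. ?C (fst ij) (snd ij) (fst uv) (snd uv)))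
             else Exit)
    | Exit \<Rightarrow> Exit
    | S u v \<Rightarrow> (if int (fst ij) = vidx N r d K v \<and> int (snd ij) = vidx N r d K u then S u v else Exit))"
    for q ij
  have dId: "\<delta> Id (i, j) = S u v \<longleftrightarrow> ?C i j u v" for i j u v
  proof
    assume h: "\<delta> Id (i, j) = S u v"
    then have "i \<noteq> j" by (auto simp: \<delta>_def)
    show "?C i j u v"
    proof (cases "\<exists>uv. ?C i j (fst uv) (snd uv)")
      case True
      then have "?C i j (fst (SOME uv. ?C i j (fst uv) (snd uv))) (snd (SOME uv. ?C i j (fst uv) (snd uv)))"
        by (rule someI_ex)
      moreover have "u = fst (SOME uv. ?C i j (fst uv) (snd uv))" "v = snd (SOME uv. ?C i j (fst uv) (snd uv))"
        using h True \<open>i \<noteq> j\<close> by (auto simp: \<delta>_def)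
      ultimately show ?thesis by simp
    next
      case False
      have "\<delta> Id (i, j) = Exit" using False \<open>i \<noteq> j\<close> unfolding \<delta>_def by simp
      then show ?thesis using h by simp
    qed
  next
    assume c: "?C i j u v"
    then have ne: "i \<noteq> j" unfolding coin_def by auto
    have ex: "\<exists>uv. ?C i j (fst uv) (snd uv)" using c by (intro exI[of _ "(u, v)"]) simp
    then have "?C i j (fst (SOME uv. ?C i j (fst uv) (snd uv))) (snd (SOME uv. ?C i j (fst uv) (snd uv)))"
      by (rule someI_ex)
    then have "u = fst (SOME uv. ?C i j (fst uv) (snd uv))" "v = snd (SOME uv. ?C i j (fst uv) (snd uv))"
      using coin_unique[OF fg c] by auto
    then show "\<delta> Id (i, j) = S u v" using ne ex by (simp add: \<delta>_def)
  qed
  have dIdI: "\<delta> Id (i, j) = Id \<longleftrightarrow> i = j" for i j by (auto simp: \<delta>_def)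
  have dIdE: "\<delta> Id (i, j) = Exit" if "\<not> (\<exists>u v. ?C i j u v)" "i \<noteq> j" for i j
    using that by (auto simp: \<delta>_def)
  have csym: "?C i j u v \<Longrightarrow> ?C j i v u" for i j u v unfolding coin_def by auto
  have tr: "triangle_automaton N (vidx N r d K) \<delta>"
    unfolding triangle_automaton_def
  proof (intro conjI ballI allI impI)
    fix q i j assume q: "q \<in> Qstates" and i: "i \<in> Sig N" and j: "j \<in> Sig N"
    show "\<delta> q (i, j) \<in> Qstates"
    proof (cases q)
      case Id
      then show ?thesis
      proof (cases "\<delta> Id (i, j)")
        case (S u v)
        then have "u \<noteq> v" using dId unfolding coin_def by blast
        then show ?thesis using S Id unfolding Qstates_def by auto
      qed (auto simp: Qstates_def)
    next
      case Exit then show ?thesis by (simp add: \<delta>_def Qstates_def)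
    next
      case (S u v) then show ?thesis using q by (auto simp: \<delta>_def Qstates_def)
    qed
  next
    fix i j show "(\<delta> Id (i, j) = Id) = (i = j)" by (rule dIdI)
  next
    fix i j u v assume "\<delta> Id (i, j) = S u v"
    then show "\<delta> Id (j, i) = S v u" using dId csym by blast
  next
    fix u v i j show "\<delta> (S u v) (i, j) = (if int i = vidx N r d K v \<and> int j = vidx N r d K u then S u v else Exit)"
      by (simp add: \<delta>_def)
  qed
  have "topology_automaton N r d K \<delta>"
    unfolding topology_automaton_def
  proof (intro conjI tr ballI impI allI)
    fix i j u v assume i: "i \<in> Sig N" and j: "j \<in> Sig N" and ne: "i \<noteq> j"
      and h: "u \<noteq> v \<and> vidx N r d K u \<in> int ` Sig N \<and> vidx N r d K v \<in> int ` Sig N \<and>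
               phi r d i (vert v) = phi r d j (vert u)"
    then have "?C i j u v" using vidx_in_iff[OF fg] unfolding coin_def by blast
    then show "\<delta> Id (i, j) = S u v" using dId by blast
  next
    fix i j assume i: "i \<in> Sig N" and j: "j \<in> Sig N" and ne: "i \<noteq> j"
      and h: "phi r d i ` K \<inter> phi r d j ` K = {}"
    have "\<not> (\<exists>u v. ?C i j u v)"
    proof
      assume "\<exists>u v. ?C i j u v"
      then obtain u v where "?C i j u v" by blast
      then have "phi r d i (vert v) \<in> phi r d i ` K \<inter> phi r d j ` K" unfolding coin_def by (metis IntI image_eqI)
      then show False using h by blast
    qed
    then show "\<delta> Id (i, j) = Exit" using dIdE ne by blast
  qed
  then show "\<exists>\<delta>. topology_automaton N r d K \<delta>" by blast
next
  note fg = assms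
  note F = fgD[OF fg]
  show "\<forall>\<delta>. topology_automaton N r d K \<delta> \<longrightarrow> gasket_automaton N (vidx N r d K) \<delta>"
  proof (intro allI impI)
    fix \<delta> assume ta: "topology_automaton N r d K \<delta>"
    note pc = prec_coin[OF fg ta]
    have inj: "u = v" if "i \<in> Sig N" "phi r d i (vert u) = phi r d i (vert v)" for i u v
      using phi_vert_inj[OF fg that] .
    have T: "triangle_automaton N (vidx N r d K) \<delta>" using ta unfolding topology_automaton_def by blast
    have U: "\<forall>u v i j j'. u \<noteq> v \<longrightarrow> prec N \<delta> u v i j \<longrightarrow> prec N \<delta> u v i j' \<longrightarrow> j = j'"
    proof (intro allI impI)
      fix u v i j j' assume "u \<noteq> v" "prec N \<delta> u v i j" "prec N \<delta> u v i j'"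
      then have c: "coin N r d K i j u v" "coin N r d K i j' u v" using pc by auto
      show "j = j'"
      proof (rule ccontr)
        assume "j \<noteq> j'"
        then show False using same_label[OF fg, of j j' u] c unfolding coin_def by metis
      qed
    qed
    have neq: "i \<noteq> j" if "i \<in> Sig N" "phi r d i (vert u) = phi r d j (vert v)" "u \<noteq> v" for i j u v
      using inj that by blast
    have G1: "coin N r d K b c VA VB" if "coin N r d K a c VA VC" "coin N r d K a b VB VC" for a b c
    proof -
      have h: "b \<in> Sig N" "c \<in> Sig N" "vert VA \<in> K" "vert VB \<in> K" "phi r d b (vert VB) = phi r d c (vert VA)"
        using that unfolding coin_def by auto
      have "b \<noteq> c" using neq[OF h(1) h(5)] by simp
      then show ?thesis using h unfolding coin_def by simp
    qed
    have G2: "coin N r d K a b VB VC" if "coin N r d K a c VA VC" "coin N r d K b c VA VB" for a b c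
    proof -
      have h: "a \<in> Sig N" "b \<in> Sig N" "vert VB \<in> K" "vert VC \<in> K" "phi r d a (vert VC) = phi r d b (vert VB)"
        using that unfolding coin_def by auto
      have "a \<noteq> b" using neq[OF h(1) h(5)] by simp
      then show ?thesis using h unfolding coin_def by simp
    qed
    have G3: "coin N r d K a c VA VC" if "coin N r d K a b VB VC" "coin N r d K b c VA VB" for a b c
    proof -
      have h: "a \<in> Sig N" "c \<in> Sig N" "vert VA \<in> K" "vert VC \<in> K" "phi r d a (vert VC) = phi r d c (vert VA)"
        using that unfolding coin_def by auto
      have "a \<noteq> c" using neq[OF h(1) h(5)] by simp
      then show ?thesis using h unfolding coin_def by simp
    qed
    have G: "(prec N \<delta> VA VC a c \<and> prec N \<delta> VB VC a b \<longrightarrow> prec N \<delta> VA VB b c) \<and>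
        (prec N \<delta> VA VC a c \<and> prec N \<delta> VA VB b c \<longrightarrow> prec N \<delta> VB VC a b) \<and>
        (prec N \<delta> VB VC a b \<and> prec N \<delta> VA VB b c \<longrightarrow> prec N \<delta> VA VC a c)" for a b c
      unfolding pc using G1 G2 G3 by blast
    show "gasket_automaton N (vidx N r d K) \<delta>"
      unfolding gasket_automaton_def
    proof (intro conjI T U allI impI)
      fix a b c
      show "prec N \<delta> VA VC a c \<and> prec N \<delta> VB VC a b \<Longrightarrow> prec N \<delta> VA VB b c"
        "prec N \<delta> VA VC a c \<and> prec N \<delta> VA VB b c \<Longrightarrow> prec N \<delta> VB VC a b"
        "prec N \<delta> VB VC a b \<and> prec N \<delta> VA VB b c \<Longrightarrow> prec N \<delta> VA VC a c"
        using G[of a c b] by blast+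
    qed (rule boundary[OF fg ta], assumption)+
  qed
qed

end
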